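(* Let the language contain a constant and let $t_1,t_2,\dots$ be a fixed enumeration of all closed terms. Let $E$ be a sentence containing only weak quantifier occurrences. In every term structure there is an $n$ such that $\|E_m\|=\|E\|$ for all $m\ge n$.
   Context: The propositional setting is as follows. - A lattice-oriented signature $\mathcal{L}$ is a finite set of connectives. Each connective $c$ has an arity $n_c$ and a polarity $p_c:\{1,\dots,n_c\}\to\{-,+\}$. It includes binary $\lor,\land,\to$ with $p_\lor\equiv p_\land\equiv +$, $p_\to(1)=-$ and $p_\to(2)=+$. - A finite $\mathcal{L}$-lattice $\mathbf{A}$ is a finite set $L$ with operations $c^L$ such that $(L,\lor^L,\land^L)$ is a lattice with order $\le$ and top $1$. Each $c^L$ is monotone in the arguments with polarity $+$ and antitone in those with polarity $-$. Moreover $1\le a\to b$ iff $a\le b$. The first-order setting is as follows. - Fix a finite $\mathcal{L}$-lattice $\mathbf{A}$ and a predicate language with predicate and function symbols of given arities. - Terms and formulas are built as usual from object variables using the connectives of $\mathcal{L}$ and the quantifiers $\forall,\exists$. - A structure consists of a nonempty set $S$, maps $P^S:S^n\to L$ for the $n$-ary predicate symbols, and maps $f^S:S^n\to S$ for the $n$-ary function symbols. - An evaluation $v$ maps variables to $S$. Formulas get values in $L$: connectives are interpreted by $c^L$; $\|\forall x\varphi\|_v=\bigwedge_{a\in S}\|\varphi\|_{v[x\to a]}$ and $\|\exists x\varphi\|_v=\bigvee_{a\in S}\|\varphi\|_{v[x\to a]}$. - A term structure is a structure whose domain $S$ is the set of all closed terms, with each function symbol interpreted as the corresponding term constructor. -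 An occurrence in a formula is positive or negative: the whole formula is positive, and going into argument $i$ of a connective $c$ keeps the polarity if $p_c(i)=+$ and flips it if $p_c(i)=-$. Quantifiers do not change polarity. - Weak quantifier occurrences are positive occurrences of $\exists$ and negative occurrences of $\forall$; strong ones are positive $\forall$ and negative $\exists$. - The $n$-th expansion $E_n$ of $E$ is obtained by replacing, from the inside out, every subformula $\exists xA(x)$ by $\bigvee_{i=1}^nA(t_i)$ and every subformula $\forall xA(x)$ by $\bigwedge_{i=1}^nA(t_i)$. *)

theory Defs
  imports Main
begin

datatype ('f, 'v) trm = Var 'v | Fn 'f "('f, 'v) trm list"

datatype ('c, 'p, 'f, 'v) form =
    Pred 'p "('f, 'v) trm list"
  | Conn 'c "('c, 'p, 'f, 'v) form list"
  | All 'v "('c, 'p, 'f, 'v) form"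
  | Ex 'v "('c, 'p, 'f, 'v) form"

fun wf_trm :: "('f \<Rightarrow> nat) \<Rightarrow> ('f, 'v) trm \<Rightarrow> bool" where
  "wf_trm fa (Var x) = True"
| "wf_trm fa (Fn f ts) = (length ts = fa f \<and> (\<forall>t \<in> set ts. wf_trm fa t))"

fun vars_trm :: "('f, 'v) trm \<Rightarrow> 'v set" where
  "vars_trm (Var x) = {x}"
| "vars_trm (Fn f ts) = (\<Union>t \<in> set ts. vars_trm t)"

text \<open>Closed (well-formed, variable-free) terms: the domain of a term structure.\<close>
definition closed_terms :: "('f \<Rightarrow> nat) \<Rightarrow> ('f, 'v) trm set" where
  "closed_terms fa = {t. wf_trm fa t \<and> vars_trm t = {}}"

fun wf_form :: "('c \<Rightarrow> nat) \<Rightarrow> ('p \<Rightarrow> nat) \<Rightarrow> ('f \<Rightarrow> nat) \<Rightarrow> ('c, 'p, 'f, 'v) form \<Rightarrow> bool" where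
  "wf_form ca pa fa (Pred p ts) = (length ts = pa p \<and> (\<forall>t \<in> set ts. wf_trm fa t))"
| "wf_form ca pa fa (Conn c As) = (length As = ca c \<and> (\<forall>A \<in> set As. wf_form ca pa fa A))"
| "wf_form ca pa fa (All x A) = wf_form ca pa fa A"
| "wf_form ca pa fa (Ex x A) = wf_form ca pa fa A"

fun free_vars :: "('c, 'p, 'f, 'v) form \<Rightarrow> 'v set" where
  "free_vars (Pred p ts) = (\<Union>t \<in> set ts. vars_trm t)"
| "free_vars (Conn c As) = (\<Union>A \<in> set As. free_vars A)"
| "free_vars (All x A) = free_vars A - {x}"
| "free_vars (Ex x A) = free_vars A - {x}"

definition sentence :: "('c \<Rightarrow> nat) \<Rightarrow> ('p \<Rightarrow> nat) \<Rightarrow> ('f \<Rightarrow> nat) \<Rightarrow> ('c, 'p, 'f, 'v) form \<Rightarrow> bool" where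
  "sentence ca pa fa A = (wf_form ca pa fa A \<and> free_vars A = {})"

text \<open>Signature: connectives 'c (a finite type), arity ca, polarity pol
  (pol c i = True means polarity + of argument i, arguments indexed 0..ca c - 1),
  with distinguished binary connectives cdisj, cconj, cimp.
  The algebra: a finite type 'l carrying its lattice order, and the interpretation
  I c of each connective.  (Every finite lattice is complete, so we use the class
  complete_lattice to have Inf/Sup available for the quantifiers.)\<close>
definition L_lattice ::
  "('c::finite \<Rightarrow> nat) \<Rightarrow> ('c \<Rightarrow> nat \<Rightarrow> bool) \<Rightarrow> 'c \<Rightarrow> 'c \<Rightarrow> 'c
   \<Rightarrow> ('c \<Rightarrow> 'l::{finite,complete_lattice} list \<Rightarrow> 'l) \<Rightarrow> bool" where
  "L_lattice ca pol cdisj cconj cimp I \<longleftrightarrow>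
     distinct [cdisj, cconj, cimp] \<and>
     ca cdisj = 2 \<and> ca cconj = 2 \<and> ca cimp = 2 \<and>
     pol cdisj 0 \<and> pol cdisj 1 \<and> pol cconj 0 \<and> pol cconj 1 \<and>
     \<not> pol cimp 0 \<and> pol cimp 1 \<and>
     (\<forall>a b. I cdisj [a, b] = sup a b) \<and>
     (\<forall>a b. I cconj [a, b] = inf a b) \<and>
     (\<forall>c xs i a b. length xs = ca c \<and> i < ca c \<and> a \<le> b \<longrightarrow>
        (if pol c i then I c (xs[i := a]) \<le> I c (xs[i := b])
                    else I c (xs[i := b]) \<le> I c (xs[i := a]))) \<and>
     (\<forall>a b. top \<le> I cimp [a, b] \<longleftrightarrow> a \<le> b)"

text \<open>In a term structure the value of a term under an evaluation v (mapping
  variables to closed terms) is the term obtained by substitution.\<close>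
fun subst_trm :: "('v \<Rightarrow> ('f, 'v) trm) \<Rightarrow> ('f, 'v) trm \<Rightarrow> ('f, 'v) trm" where
  "subst_trm v (Var x) = v x"
| "subst_trm v (Fn f ts) = Fn f (map (subst_trm v) ts)"

fun eval_ts ::
  "('f \<Rightarrow> nat) \<Rightarrow> ('c \<Rightarrow> 'l::complete_lattice list \<Rightarrow> 'l) \<Rightarrow> ('p \<Rightarrow> ('f, 'v) trm list \<Rightarrow> 'l)
   \<Rightarrow> ('v \<Rightarrow> ('f, 'v) trm) \<Rightarrow> ('c, 'p, 'f, 'v) form \<Rightarrow> 'l" where
  "eval_ts fa I P v (Pred p ts) = P p (map (subst_trm v) ts)"
| "eval_ts fa I P v (Conn c As) = I c (map (eval_ts fa I P v) As)"
| "eval_ts fa I P v (All x A) = Inf ((\<lambda>a. eval_ts fa I P (v(x := a)) A) ` closed_terms fa)"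
| "eval_ts fa I P v (Ex x A) = Sup ((\<lambda>a. eval_ts fa I P (v(x := a)) A) ` closed_terms fa)"

text \<open>only_weak pol pos A: every quantifier occurrence in A is weak, where pos is
  the polarity of the position of A (True = positive).\<close>
function only_weak :: "('c \<Rightarrow> nat \<Rightarrow> bool) \<Rightarrow> bool \<Rightarrow> ('c, 'p, 'f, 'v) form \<Rightarrow> bool" where
  "only_weak pol pos (Pred p ts) = True"
| "only_weak pol pos (Conn c As) =
     (\<forall>(i, A) \<in> set (zip [0..<length As] As).
        only_weak pol (if pol c i then pos else \<not> pos) A)"
| "only_weak pol pos (All x A) = (\<not> pos \<and> only_weak pol pos A)"
| "only_weak pol pos (Ex x A) = (pos \<and> only_weak pol pos A)"
  by pat_completeness auto
termination
  by (relation "measure (\<lambda>(_, _, A). size A)")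
     (auto dest!: set_zip_rightD simp: less_Suc_eq_le intro: size_list_estimation')

fun subst_form :: "'v \<Rightarrow> ('f, 'v) trm \<Rightarrow> ('c, 'p, 'f, 'v) form \<Rightarrow> ('c, 'p, 'f, 'v) form" where
  "subst_form x s (Pred p ts) = Pred p (map (subst_trm (Var(x := s))) ts)"
| "subst_form x s (Conn c As) = Conn c (map (subst_form x s) As)"
| "subst_form x s (All y A) = (if y = x then All y A else All y (subst_form x s A))"
| "subst_form x s (Ex y A) = (if y = x then Ex y A else Ex y (subst_form x s A))"

fun big_conn :: "'c \<Rightarrow> ('c, 'p, 'f, 'v) form list \<Rightarrow> ('c, 'p, 'f, 'v) form" where
  "big_conn c [] = Conn c []"
| "big_conn c [A] = A"
| "big_conn c (A # B # As) = Conn c [A, big_conn c (B # As)]"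

fun expansion :: "'c \<Rightarrow> 'c \<Rightarrow> (nat \<Rightarrow> ('f, 'v) trm) \<Rightarrow> nat
   \<Rightarrow> ('c, 'p, 'f, 'v) form \<Rightarrow> ('c, 'p, 'f, 'v) form" where
  "expansion cdisj cconj t n (Pred p ts) = Pred p ts"
| "expansion cdisj cconj t n (Conn c As) = Conn c (map (expansion cdisj cconj t n) As)"
| "expansion cdisj cconj t n (All x A) =
     big_conn cconj (map (\<lambda>i. subst_form x (t i) (expansion cdisj cconj t n A)) [1..<n+1])"
| "expansion cdisj cconj t n (Ex x A) =
     big_conn cdisj (map (\<lambda>i. subst_form x (t i) (expansion cdisj cconj t n A)) [1..<n+1])"

end

theory Submission
  imports Defs
begin


lemma subst_closed: "vars_trm s = {} \<Longrightarrow> subst_trm v s = s"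
  by (induction s) (auto intro: map_idI)

lemma subst_trm_comp: "vars_trm s = {} \<Longrightarrow>
  subst_trm v (subst_trm (Var(x:=s)) u) = subst_trm (v(x:=s)) u"
  by (induction u) (auto simp: subst_closed)

lemma eval_subst: "vars_trm s = {} \<Longrightarrow>
  eval_ts fa I P v (subst_form x s B) = eval_ts fa I P (v(x:=s)) B"
proof (induction B arbitrary: v)
  case (Pred p ts) show ?case unfolding eval_ts.simps subst_form.simps map_map comp_def subst_trm_comp[OF Pred.prems] ..
next
  case (Conn c As) then show ?case by (simp cong: map_cong)
next
  case (All y B)
  show ?case
  proof (cases "y = x")
    case True then show ?thesis by (simp only: subst_form.simps eval_ts.simps if_True fun_upd_upd simp_thms)
  next
    case False
    have "eval_ts fa I P (v(y:=a)) (subst_form x s B) = eval_ts fa I P ((v(x:=s))(y:=a)) B" for a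
    proof -
      have "eval_ts fa I P (v(y:=a)) (subst_form x s B) = eval_ts fa I P ((v(y:=a))(x:=s)) B"
        by (rule All.IH[OF All.prems])
      also have "(v(y:=a))(x:=s) = (v(x:=s))(y:=a)" using False by (rule fun_upd_twist)
      finally show ?thesis .
    qed
    with False show ?thesis by (simp only: subst_form.simps eval_ts.simps if_False)
  qed
next
  case (Ex y B)
  show ?case
  proof (cases "y = x")
    case True then show ?thesis by (simp only: subst_form.simps eval_ts.simps if_True fun_upd_upd simp_thms)
  next
    case False
    have "eval_ts fa I P (v(y:=a)) (subst_form x s B) = eval_ts fa I P ((v(x:=s))(y:=a)) B" for a
    proof -
      have "eval_ts fa I P (v(y:=a)) (subst_form x s B) = eval_ts fa I P ((v(y:=a))(x:=s)) B"
        by (rule Ex.IH[OF Ex.prems])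
      also have "(v(y:=a))(x:=s) = (v(x:=s))(y:=a)" using False by (rule fun_upd_twist)
      finally show ?thesis .
    qed
    with False show ?thesis by (simp only: subst_form.simps eval_ts.simps if_False)
  qed
qed

lemma subst_trm_agree: "(\<forall>x\<in>vars_trm u. v x = w x) \<Longrightarrow> subst_trm v u = subst_trm w u"
  by (induction u) auto

lemma eval_agree: "(\<forall>x\<in>free_vars B. v x = w x) \<Longrightarrow> eval_ts fa I P v B = eval_ts fa I P w B"
proof (induction B arbitrary: v w)
  case (Pred p ts) then show ?case
    by (auto intro!: arg_cong[where f="P p"] subst_trm_agree)
next
  case (Conn c As) then show ?case by (auto intro!: arg_cong[where f="I c"])
next
  case (All y B)
  have "\<And>a. eval_ts fa I P (v(y:=a)) B = eval_ts fa I P (w(y:=a)) B"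
    using All by (intro All.IH) auto
  then show ?case by simp
next
  case (Ex y B)
  have "\<And>a. eval_ts fa I P (v(y:=a)) B = eval_ts fa I P (w(y:=a)) B"
    using Ex by (intro Ex.IH) auto
  then show ?case by simp
qed

lemma vars_subst_trm: "vars_trm s = {} \<Longrightarrow> vars_trm (subst_trm (Var(x:=s)) u) \<subseteq> vars_trm u - {x}"
  by (induction u) auto

lemma fv_subst: "vars_trm s = {} \<Longrightarrow> free_vars (subst_form x s B) \<subseteq> free_vars B - {x}"
proof (induction B)
  case (Pred p ts) then show ?case using vars_subst_trm by fastforce
qed auto

lemma fv_big_conn: "free_vars (big_conn c Bs) \<subseteq> (\<Union>B\<in>set Bs. free_vars B)"
  by (induction c Bs rule: big_conn.induct) auto

lemma fv_expansion:
  assumes "\<And>i. i \<ge> 1 \<Longrightarrow> vars_trm (t i) = {}"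
  shows "free_vars (expansion cd cc t m A) \<subseteq> free_vars A"
proof (induction A)
  case (All x A)
  show ?case using fv_big_conn[of cc] fv_subst[OF assms] All by fastforce
next
  case (Ex x A)
  show ?case using fv_big_conn[of cd] fv_subst[OF assms] Ex by fastforce
qed auto

lemma finite_eventually:
  assumes "finite S" "\<forall>y\<in>S. \<exists>N::nat. \<forall>m\<ge>N. Q y m"
  shows "\<exists>N. \<forall>m\<ge>N. \<forall>y\<in>S. Q y m"
  using assms
proof (induction S rule: finite_induct)
  case (insert a F)
  then obtain N1 where "\<forall>m\<ge>N1. \<forall>y\<in>F. Q y m" by auto
  moreover obtain N2 where "\<forall>m\<ge>N2. Q a m" using insert by auto
  ultimately show ?case by (intro exI[of _ "max N1 N2"]) auto
qed simp

lemma eval_big_disj: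
  assumes "\<forall>a b. I cd [a, b] = sup a b" "Bs \<noteq> []"
  shows "eval_ts fa I P v (big_conn cd Bs) = Sup (set (map (eval_ts fa I P v) Bs))"
  using assms(2)
  proof (induction Bs rule: list_nonempty_induct)
  case (cons x xs) then show ?case by (cases xs) (auto simp: assms(1))
qed simp

lemma eval_big_conj:
  assumes "\<forall>a b. I cc [a, b] = inf a b" "Bs \<noteq> []"
  shows "eval_ts fa I P v (big_conn cc Bs) = Inf (set (map (eval_ts fa I P v) Bs))"
  using assms(2)
  proof (induction Bs rule: list_nonempty_induct)
  case (cons x xs) then show ?case by (cases xs) (auto simp: assms(1))
qed simp

lemma mono_list:
  assumes mono: "\<forall>c xs i a b. length xs = ca c \<and> i < ca c \<and> a \<le> b \<longrightarrow>
        (if pol c i then I c (xs[i := a]) \<le> I c (xs[i := b])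
                    else I c (xs[i := b]) \<le> I c (xs[i := a]))"
    and len: "length xs = ca c" "length ys = ca c"
    and le: "\<forall>i<ca c. if pol c i then xs!i \<le> ys!i else ys!i \<le> xs!i"
  shows "I c xs \<le> (I c ys :: 'l::order)"
proof -
  define z where "z k = take k ys @ drop k xs" for k
  have lz: "length (z k) = ca c" for k using len by (simp add: z_def)
  have step: "I c (z k) \<le> I c (z (Suc k))" if "k < ca c" for k
  proof -
    have z1: "z (Suc k) = (z k)[k := ys!k]" using len that
      by (simp add: z_def take_Suc_conv_app_nth list_update_append Cons_nth_drop_Suc[symmetric])
    have z0: "z k = (z k)[k := xs!k]" using len that
      by (simp add: z_def list_update_append Cons_nth_drop_Suc[symmetric])
    show ?thesis
    proof (cases "pol c k")
      case True
      then show ?thesis using mono[rule_format, of "z k" c k "xs!k" "ys!k"] le that lz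
        by (metis z0 z1)
    next
      case False
      then show ?thesis using mono[rule_format, of "z k" c k "ys!k" "xs!k"] le that lz
        by (metis z0 z1)
    qed
  qed
  have "I c (z 0) \<le> I c (z k)" if "k \<le> ca c" for k
    using that
  proof (induction k)
    case (Suc k) then show ?case using step[of k] by (meson Suc_leD Suc_le_lessD order_trans)
  qed simp
  from this[of "ca c"] show ?thesis using len by (simp add: z_def)
qed

lemma main_lemma:
  fixes I :: "'c \<Rightarrow> 'l::{finite,complete_lattice} list \<Rightarrow> 'l"
    and t :: "nat \<Rightarrow> ('f, 'v) trm"
  assumes hdisj: "\<forall>a b. I cd [a, b] = sup a b"
    and hconj: "\<forall>a b. I cc [a, b] = inf a b"
    and mono: "\<forall>c xs i a b. length xs = ca c \<and> i < ca c \<and> a \<le> b \<longrightarrow>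
        (if pol c i then I c (xs[i := a]) \<le> I c (xs[i := b])
                    else I c (xs[i := b]) \<le> I c (xs[i := a]))"
    and tcl: "\<And>i. i \<ge> 1 \<Longrightarrow> t i \<in> closed_terms fa"
    and tsurj: "closed_terms fa \<subseteq> t ` {1..}"
  shows "wf_form ca pa fa A \<Longrightarrow> only_weak pol pos A \<Longrightarrow>
    (\<forall>v. \<exists>N. \<forall>m\<ge>N. eval_ts fa I P v (expansion cd cc t m A) = eval_ts fa I P v A) \<and>
    (\<forall>v m. m \<ge> 1 \<longrightarrow> (if pos then eval_ts fa I P v (expansion cd cc t m A) \<le> eval_ts fa I P v A
                   else eval_ts fa I P v A \<le> eval_ts fa I P v (expansion cd cc t m A)))"
proof (induction A arbitrary: pos)
  case (Pred p ts) then show ?case by simp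
next
  case (Conn c As)
  have len: "length As = ca c" and wfs: "\<forall>A\<in>set As. wf_form ca pa fa A" using Conn.prems by auto
  have ow: "only_weak pol (if pol c i then pos else \<not> pos) (As!i)" if "i < length As" for i
  proof -
    have "(i, As!i) \<in> set (zip [0..<length As] As)" using that by (auto simp: set_zip intro!: exI[of _ i])
    then show ?thesis using Conn.prems(2) by auto
  qed
  have IH: "(\<forall>v. \<exists>N. \<forall>m\<ge>N. eval_ts fa I P v (expansion cd cc t m (As!i)) = eval_ts fa I P v (As!i)) \<and>
    (\<forall>v m. m \<ge> 1 \<longrightarrow> (if (if pol c i then pos else \<not> pos) then eval_ts fa I P v (expansion cd cc t m (As!i)) \<le> eval_ts fa I P v (As!i)
                   else eval_ts fa I P v (As!i) \<le> eval_ts fa I P v (expansion cd cc t m (As!i))))"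
    if "i < length As" for i
    using Conn.IH[OF nth_mem[OF that]] wfs ow[OF that] that by auto
  have ev: "\<exists>N. \<forall>m\<ge>N. eval_ts fa I P v (expansion cd cc t m (Conn c As)) = eval_ts fa I P v (Conn c As)" for v
  proof -
    have "\<exists>N. \<forall>m\<ge>N. \<forall>i\<in>{..<length As}. eval_ts fa I P v (expansion cd cc t m (As!i)) = eval_ts fa I P v (As!i)"
      using IH by (intro finite_eventually) auto
    then obtain N where N: "\<forall>m\<ge>N. \<forall>i\<in>{..<length As}. eval_ts fa I P v (expansion cd cc t m (As!i)) = eval_ts fa I P v (As!i)" by blast
    have "eval_ts fa I P v (expansion cd cc t m (Conn c As)) = eval_ts fa I P v (Conn c As)" if "m \<ge> N" for m
    proof -
      have "map (eval_ts fa I P v) (map (expansion cd cc t m) As) = map (eval_ts fa I P v) As"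
        using N that by (intro nth_equalityI) auto
      then show ?thesis by (simp only: expansion.simps eval_ts.simps)
    qed
    then show ?thesis by blast
  qed
  have bd: "if pos then eval_ts fa I P v (expansion cd cc t m (Conn c As)) \<le> eval_ts fa I P v (Conn c As)
                   else eval_ts fa I P v (Conn c As) \<le> eval_ts fa I P v (expansion cd cc t m (Conn c As))"
    if "m \<ge> 1" for v m
  proof (cases pos)
    case True
    have "I c (map (eval_ts fa I P v) (map (expansion cd cc t m) As)) \<le> I c (map (eval_ts fa I P v) As)"
      apply (rule mono_list[OF mono])
      using len IH that True by (auto split: if_splits)
    then show ?thesis using True by simp
  next
    case False
    have "I c (map (eval_ts fa I P v) As) \<le> I c (map (eval_ts fa I P v) (map (expansion cd cc t m) As))"
      apply (rule mono_list[OF mono])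
      using len IH that False by (auto split: if_splits)
    then show ?thesis using False by simp
  qed
  show ?case using ev bd by blast
next
  case (Ex x A)
  have pos: pos and owA: "only_weak pol True A" using Ex.prems by auto
  have wfA: "wf_form ca pa fa A" using Ex.prems by simp
  note IH = Ex.IH[OF wfA owA]
  have vt: "vars_trm (t i) = {}" if "i \<ge> 1" for i using tcl[OF that] by (simp add: closed_terms_def)
  have eq: "eval_ts fa I P v (expansion cd cc t m (Ex x A)) = Sup ((\<lambda>i. eval_ts fa I P (v(x:=t i)) (expansion cd cc t m A)) ` {1..m})"
    if "m \<ge> 1" for v m
  proof -
    have "eval_ts fa I P v (expansion cd cc t m (Ex x A)) =
      Sup (set (map (eval_ts fa I P v) (map (\<lambda>i. subst_form x (t i) (expansion cd cc t m A)) [1..<m+1])))"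
      unfolding expansion.simps by (rule eval_big_disj[where I=I and cd=cd, OF hdisj]) (use that in simp)
    also have "\<dots> = Sup ((\<lambda>i. eval_ts fa I P v (subst_form x (t i) (expansion cd cc t m A))) ` {1..<m+1})"
      by (simp only: set_map image_image set_upt)
    also have "{1..<m+1} = {1..m}" by auto
    also have "(\<lambda>i. eval_ts fa I P v (subst_form x (t i) (expansion cd cc t m A))) ` {1..m}
        = (\<lambda>i. eval_ts fa I P (v(x:=t i)) (expansion cd cc t m A)) ` {1..m}"
      by (intro image_cong refl eval_subst vt) auto
    finally show ?thesis .
  qed
  have bd: "eval_ts fa I P v (expansion cd cc t m (Ex x A)) \<le> eval_ts fa I P v (Ex x A)" if "m \<ge> 1" for v m
    unfolding eq[OF that] eval_ts.simps
  proof (rule Sup_mono)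
    fix b assume "b \<in> (\<lambda>i. eval_ts fa I P (v(x:=t i)) (expansion cd cc t m A)) ` {1..m}"
    then obtain i where i: "i \<in> {1..m}" and b: "b = eval_ts fa I P (v(x:=t i)) (expansion cd cc t m A)" by auto
    have "b \<le> eval_ts fa I P (v(x:=t i)) A" using IH that b by auto
    moreover have "t i \<in> closed_terms fa" using tcl i by auto
    ultimately show "\<exists>b'\<in>(\<lambda>a. eval_ts fa I P (v(x := a)) A) ` closed_terms fa. b \<le> b'" by blast
  qed
  have ev: "\<exists>N. \<forall>m\<ge>N. eval_ts fa I P v (expansion cd cc t m (Ex x A)) = eval_ts fa I P v (Ex x A)" for v
  proof -
    let ?S = "(\<lambda>a. eval_ts fa I P (v(x := a)) A) ` closed_terms fa"
    have fin: "finite ?S" by (rule finite_subset[of _ UNIV]) auto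
    have "\<exists>N. \<forall>m\<ge>N. \<forall>y\<in>?S. \<exists>i\<in>{1..m}. y \<le> eval_ts fa I P (v(x:=t i)) (expansion cd cc t m A)"
    proof (rule finite_eventually[OF fin], rule ballI)
      fix y assume "y \<in> ?S"
      then obtain a where a: "a \<in> closed_terms fa" and y: "y = eval_ts fa I P (v(x := a)) A" by auto
      then obtain i where i: "i \<ge> 1" "a = t i" using tsurj by auto
      obtain N' where N': "\<forall>m\<ge>N'. eval_ts fa I P (v(x:=t i)) (expansion cd cc t m A) = eval_ts fa I P (v(x:=t i)) A"
        using IH by blast
      show "\<exists>N. \<forall>m\<ge>N. \<exists>i\<in>{1..m}. y \<le> eval_ts fa I P (v(x:=t i)) (expansion cd cc t m A)"
        using N' i y by (intro exI[of _ "max i N'"]) force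
    qed
    then obtain N where N: "\<forall>m\<ge>N. \<forall>y\<in>?S. \<exists>i\<in>{1..m}. y \<le> eval_ts fa I P (v(x:=t i)) (expansion cd cc t m A)" by blast
    have "eval_ts fa I P v (expansion cd cc t m (Ex x A)) = eval_ts fa I P v (Ex x A)" if "m \<ge> max N 1" for m
    proof (rule antisym)
      show "eval_ts fa I P v (expansion cd cc t m (Ex x A)) \<le> eval_ts fa I P v (Ex x A)" using bd that by simp
      show "eval_ts fa I P v (Ex x A) \<le> eval_ts fa I P v (expansion cd cc t m (Ex x A))"
        using that unfolding eq[OF order.trans[OF max.cobounded2 that]] eval_ts.simps
        by (intro Sup_mono) (use N in force)
    qed
    then show ?thesis by blast
  qed
  show ?case using ev bd pos by simp
next
  case (All x A)
  have pos: "\<not> pos" and owA: "only_weak pol False A" using All.prems by auto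
  have wfA: "wf_form ca pa fa A" using All.prems by simp
  note IH = All.IH[OF wfA owA]
  have vt: "vars_trm (t i) = {}" if "i \<ge> 1" for i using tcl[OF that] by (simp add: closed_terms_def)
  have eq: "eval_ts fa I P v (expansion cd cc t m (All x A)) = Inf ((\<lambda>i. eval_ts fa I P (v(x:=t i)) (expansion cd cc t m A)) ` {1..m})"
    if "m \<ge> 1" for v m
  proof -
    have "eval_ts fa I P v (expansion cd cc t m (All x A)) =
      Inf (set (map (eval_ts fa I P v) (map (\<lambda>i. subst_form x (t i) (expansion cd cc t m A)) [1..<m+1])))"
      unfolding expansion.simps by (rule eval_big_conj[where I=I and cc=cc, OF hconj]) (use that in simp)
    also have "\<dots> = Inf ((\<lambda>i. eval_ts fa I P v (subst_form x (t i) (expansion cd cc t m A))) ` {1..<m+1})"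
      by (simp only: set_map image_image set_upt)
    also have "{1..<m+1} = {1..m}" by auto
    also have "(\<lambda>i. eval_ts fa I P v (subst_form x (t i) (expansion cd cc t m A))) ` {1..m}
        = (\<lambda>i. eval_ts fa I P (v(x:=t i)) (expansion cd cc t m A)) ` {1..m}"
      by (intro image_cong refl eval_subst vt) auto
    finally show ?thesis .
  qed
  have bd: "eval_ts fa I P v (All x A) \<le> eval_ts fa I P v (expansion cd cc t m (All x A))" if "m \<ge> 1" for v m
    unfolding eq[OF that] eval_ts.simps
  proof (rule Inf_mono)
    fix b assume "b \<in> (\<lambda>i. eval_ts fa I P (v(x:=t i)) (expansion cd cc t m A)) ` {1..m}"
    then obtain i where i: "i \<in> {1..m}" and b: "b = eval_ts fa I P (v(x:=t i)) (expansion cd cc t m A)" by auto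
    have "eval_ts fa I P (v(x:=t i)) A \<le> b" using IH that b by auto
    moreover have "t i \<in> closed_terms fa" using tcl i by auto
    ultimately show "\<exists>b'\<in>(\<lambda>a. eval_ts fa I P (v(x := a)) A) ` closed_terms fa. b' \<le> b" by blast
  qed
  have ev: "\<exists>N. \<forall>m\<ge>N. eval_ts fa I P v (expansion cd cc t m (All x A)) = eval_ts fa I P v (All x A)" for v
  proof -
    let ?S = "(\<lambda>a. eval_ts fa I P (v(x := a)) A) ` closed_terms fa"
    have fin: "finite ?S" by (rule finite_subset[of _ UNIV]) auto
    have "\<exists>N. \<forall>m\<ge>N. \<forall>y\<in>?S. \<exists>i\<in>{1..m}. eval_ts fa I P (v(x:=t i)) (expansion cd cc t m A) \<le> y"
    proof (rule finite_eventually[OF fin], rule ballI)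
      fix y assume "y \<in> ?S"
      then obtain a where a: "a \<in> closed_terms fa" and y: "y = eval_ts fa I P (v(x := a)) A" by auto
      then obtain i where i: "i \<ge> 1" "a = t i" using tsurj by auto
      obtain N' where N': "\<forall>m\<ge>N'. eval_ts fa I P (v(x:=t i)) (expansion cd cc t m A) = eval_ts fa I P (v(x:=t i)) A"
        using IH by blast
      show "\<exists>N. \<forall>m\<ge>N. \<exists>i\<in>{1..m}. eval_ts fa I P (v(x:=t i)) (expansion cd cc t m A) \<le> y"
        using N' i y by (intro exI[of _ "max i N'"]) force
    qed
    then obtain N where N: "\<forall>m\<ge>N. \<forall>y\<in>?S. \<exists>i\<in>{1..m}. eval_ts fa I P (v(x:=t i)) (expansion cd cc t m A) \<le> y" by blast
    have "eval_ts fa I P v (expansion cd cc t m (All x A)) = eval_ts fa I P v (All x A)" if "m \<ge> max N 1" for m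
    proof (rule antisym)
      show "eval_ts fa I P v (All x A) \<le> eval_ts fa I P v (expansion cd cc t m (All x A))" using bd that by simp
      show "eval_ts fa I P v (expansion cd cc t m (All x A)) \<le> eval_ts fa I P v (All x A)"
        using that unfolding eq[OF order.trans[OF max.cobounded2 that]] eval_ts.simps
        by (intro Inf_mono) (use N in force)
    qed
    then show ?thesis by blast
  qed
  show ?case using ev bd pos by simp
qed



theorem mainTheorem15:
  fixes ca :: "'c::finite \<Rightarrow> nat" and pol :: "'c \<Rightarrow> nat \<Rightarrow> bool"
    and cdisj cconj cimp :: 'c
    and I :: "'c \<Rightarrow> 'l::{finite,complete_lattice} list \<Rightarrow> 'l"
    and pa :: "'p \<Rightarrow> nat" and fa :: "'f \<Rightarrow> nat"
    and t :: "nat \<Rightarrow> ('f, 'v) trm"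
    and E :: "('c, 'p, 'f, 'v) form"
    and P :: "'p \<Rightarrow> ('f, 'v) trm list \<Rightarrow> 'l"
  assumes "L_lattice ca pol cdisj cconj cimp I"
    and "\<exists>f. fa f = 0"
    and "t ` {1..} = closed_terms fa"
    and "sentence ca pa fa E"
    and "only_weak pol True E"
  shows "\<exists>n\<ge>1. \<forall>m\<ge>n. \<forall>v. (\<forall>x. v x \<in> closed_terms fa) \<longrightarrow>
           eval_ts fa I P v (expansion cdisj cconj t m E) = eval_ts fa I P v E"
  proof -
  have hdisj: "\<forall>a b. I cdisj [a, b] = sup a b" using assms(1) unfolding L_lattice_def by (elim conjE) assumption
  have hconj: "\<forall>a b. I cconj [a, b] = inf a b" using assms(1) unfolding L_lattice_def by (elim conjE) assumption
  have mono: "\<forall>c xs i a b. length xs = ca c \<and> i < ca c \<and> a \<le> b \<longrightarrow>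
        (if pol c i then I c (xs[i := a]) \<le> I c (xs[i := b])
                    else I c (xs[i := b]) \<le> I c (xs[i := a]))"
    using assms(1) unfolding L_lattice_def by (elim conjE) assumption
  have tcl: "\<And>i. i \<ge> 1 \<Longrightarrow> t i \<in> closed_terms fa" using assms(3) by auto
  have tsurj: "closed_terms fa \<subseteq> t ` {1..}" using assms(3) by auto
  have vt: "\<And>i. i \<ge> 1 \<Longrightarrow> vars_trm (t i) = {}" using tcl by (simp add: closed_terms_def)
  have wf: "wf_form ca pa fa E" and fv: "free_vars E = {}" using assms(4) by (auto simp: sentence_def)
  have "\<forall>v. \<exists>N. \<forall>m\<ge>N. eval_ts fa I P v (expansion cdisj cconj t m E) = eval_ts fa I P v E"
    using main_lemma[OF hdisj hconj mono tcl tsurj wf assms(5)] by blast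
  then obtain N where N: "\<forall>m\<ge>N. eval_ts fa I P (\<lambda>_. t 1) (expansion cdisj cconj t m E) = eval_ts fa I P (\<lambda>_. t 1) E"
    by blast
  have "eval_ts fa I P v (expansion cdisj cconj t m E) = eval_ts fa I P v E" if "m \<ge> max N 1" for m v
  proof -
    have "free_vars (expansion cdisj cconj t m E) = {}" using fv_expansion[of t cdisj cconj m E, OF vt] fv by auto
    then have "eval_ts fa I P v (expansion cdisj cconj t m E) = eval_ts fa I P (\<lambda>_. t 1) (expansion cdisj cconj t m E)"
      by (intro eval_agree) auto
    also have "\<dots> = eval_ts fa I P (\<lambda>_. t 1) E" using N that by simp
    also have "\<dots> = eval_ts fa I P v E" using fv by (intro eval_agree) auto
    finally show ?thesis .
  qed
  then show ?thesis by (intro exI[of _ "max N 1"]) auto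
qed

end
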